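(* Let $H,K$ be $n$-Hilbert spaces, fix $a_2,\dots,a_n\in H$, $b_2,\dots,b_n\in K$, $C_1\in\mathcal{GB}(H_F)$, $C_2\in\mathcal{GB}(K_G)$. Let $\{f_i\}_{i=1}^\infty,\{e_i\}_{i=1}^\infty$ be a pair of dual $C_1$-controlled frames associated to $(a_2,\dots,a_n)$ for $H$ and $\{g_j\}_{j=1}^\infty,\{h_j\}_{j=1}^\infty$ a pair of dual $C_2$-controlled frames associated to $(b_2,\dots,b_n)$ for $K$. Suppose $U\in\mathcal{B}(H_F)$ and $V\in\mathcal{B}(K_G)$ are unitary, $C_1$ commutes with $U$ and $C_2$ commutes with $V$. Then $\Lambda=\{(U\otimes V)(f_i\otimes g_j)\}_{i,j=1}^\infty$ and $\Gamma=\{(U\otimes V)(e_i\otimes h_j)\}_{i,j=1}^\infty$ form a pair of dual $(C_1\otimes C_2)$-controlled frames associated to $(a_2\otimes b_2,\dots,a_n\otimes b_n)$ for $H\otimes K$.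
   Context: Let $n\ge2$. For a complex $n$-Hilbert space $H$ with $n$-inner product $\langle\cdot,\cdot|\cdot,\dots,\cdot\rangle_1$ and $n$-norm $\|x_1,\dots,x_n\|_1=\langle x_1,x_1|x_2,\dots,x_n\rangle_1^{1/2}$, and fixed $a_2,\dots,a_n\in H$, $F=\{a_2,\dots,a_n\}$: $\langle x,y\rangle_F=\langle x,y|a_2,\dots,a_n\rangle_1$ is a semi-inner product on $H$ inducing an inner product on $H/L_F$ ($L_F=\mathrm{span}\,F$); identifying $H/L_F$ with an algebraic complement of $L_F$, $H_F$ is its Hilbert completion, with norm written $\|f,a_2,\dots,a_n\|_1$. Likewise $K$ with $\langle\cdot,\cdot|\cdot,\dots,\cdot\rangle_2$, $G=\{b_2,\dots,b_n\}$, Hilbert space $K_G$. $H\otimes K$ carries the $n$-inner product $\langle f_1\otimes g_1,f_2\otimes g_2|f_3\otimes g_3,\dots,f_n\otimes g_n\rangle=\langle f_1,f_2|f_3,\dots,f_n\rangle_1\langle g_1,g_2|g_3,\dots,g_n\rangle_2$ and $n$-norm $\|f_1\otimes g_1,\dots,f_n\otimes g_n\|=\|f_1,\dots,f_n\|_1\|g_1,\dots,g_n\|_2$; $H_F\otimes K_G$ is the Hilbert tensor product and $(Q\otimes T)(f\otimes g)=Qf\otimes Tg$. $\mathcal{B}(\cdot)$: bounded operators; $\mathcal{GB}(\cdot)$: those with bounded inverse. For $C\in\mathcal{GB}(H_F)$, $\{f_i\}\subseteq H$ is a $C$-controlled frame associated to $(a_2,\dots,a_n)$ for $H$ if there are $0<A\le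 B<\infty$ with $A\|f,a_2,\dots,a_n\|_1^2\le\sum_i\langle f,f_i|a_2,\dots,a_n\rangle_1\langle Cf_i,f|a_2,\dots,a_n\rangle_1\le B\|f,a_2,\dots,a_n\|_1^2$ for all $f\in H_F$; $\{f_i\},\{e_i\}$ are a pair of dual $C$-controlled frames if both are $C$-controlled frames and $f=\sum_i\langle f,e_i|a_2,\dots,a_n\rangle_1Cf_i$ for all $f\in H_F$ (similarly for $K$). A family $\{\phi_{ij}\}\subseteq H\otimes K$ is a $(C_1\otimes C_2)$-controlled frame associated to $(a_2\otimes b_2,\dots,a_n\otimes b_n)$ if there are $0<A\le B<\infty$ with $A\|f\otimes g,a_2\otimes b_2,\dots\|^2\le\sum_{i,j}\langle f\otimes g,\phi_{ij}|a_2\otimes b_2,\dots,a_n\otimes b_n\rangle\langle(C_1\otimes C_2)\phi_{ij},f\otimes g|a_2\otimes b_2,\dots,a_n\otimes b_n\rangle\le B\|f\otimes g,a_2\otimes b_2,\dots\|^2$ for all $f\in H_F$, $g\in K_G$. Two such families $\{\phi_{ij}\},\{\psi_{ij}\}$ form a pair of dual $(C_1\otimes C_2)$-controlled frames if $f\otimes g=\sum_{i,j}\langle f\otimes g,\psi_{ij}|a_2\otimes b_2,\dots,a_n\otimes b_n\rangle(C_1\otimes C_2)\phi_{ij}$ for all $f\in H_F$, $g\in K_G$. *)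

theory Defs
  imports Complex_Main "HOL-Library.Multiset"
begin

text \<open>A complex vector space is given by a carrier type of class ab_group_add together
with a scalar multiplication sc; an inner product ip is linear in the first argument.\<close>

definition cnorm :: "('a \<Rightarrow> 'a \<Rightarrow> complex) \<Rightarrow> 'a \<Rightarrow> real" where
  "cnorm ip x = sqrt (Re (ip x x))"

definition complex_inner_space ::
  "(complex \<Rightarrow> 'a::ab_group_add \<Rightarrow> 'a) \<Rightarrow> ('a \<Rightarrow> 'a \<Rightarrow> complex) \<Rightarrow> bool" where
  "complex_inner_space sc ip \<longleftrightarrow>
     vector_space sc \<and>
     (\<forall>x y z. ip (x + y) z = ip x z + ip y z) \<and>
     (\<forall>a x y. ip (sc a x) y = a * ip x y) \<and>
     (\<forall>x y. ip y x = cnj (ip x y)) \<and>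
     (\<forall>x. Im (ip x x) = 0 \<and> Re (ip x x) \<ge> 0) \<and>
     (\<forall>x. ip x x = 0 \<longrightarrow> x = 0)"

definition hilbert_space ::
  "(complex \<Rightarrow> 'a::ab_group_add \<Rightarrow> 'a) \<Rightarrow> ('a \<Rightarrow> 'a \<Rightarrow> complex) \<Rightarrow> bool" where
  "hilbert_space sc ip \<longleftrightarrow>
     complex_inner_space sc ip \<and>
     (\<forall>X::nat \<Rightarrow> 'a.
        (\<forall>e>0. \<exists>N. \<forall>m\<ge>N. \<forall>k\<ge>N. cnorm ip (X m - X k) < e) \<longrightarrow>
        (\<exists>l. (\<lambda>k. cnorm ip (X k - l)) \<longlonglongrightarrow> 0))"

definition sums_in :: "('a::ab_group_add \<Rightarrow> real) \<Rightarrow> (nat \<Rightarrow> 'a) \<Rightarrow> 'a \<Rightarrow> bool" where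
  "sums_in nrm x s \<longleftrightarrow> (\<lambda>N. nrm ((\<Sum>i<N. x i) - s)) \<longlonglongrightarrow> 0"

definition bounded_op ::
  "(complex \<Rightarrow> 'a::ab_group_add \<Rightarrow> 'a) \<Rightarrow> ('a \<Rightarrow> 'a \<Rightarrow> complex) \<Rightarrow> ('a \<Rightarrow> 'a) \<Rightarrow> bool" where
  "bounded_op sc ip T \<longleftrightarrow>
     Vector_Spaces.linear sc sc T \<and> (\<exists>M. \<forall>x. cnorm ip (T x) \<le> M * cnorm ip x)"

definition GB_op ::
  "(complex \<Rightarrow> 'a::ab_group_add \<Rightarrow> 'a) \<Rightarrow> ('a \<Rightarrow> 'a \<Rightarrow> complex) \<Rightarrow> ('a \<Rightarrow> 'a) \<Rightarrow> bool" where
  "GB_op sc ip T \<longleftrightarrow>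
     bounded_op sc ip T \<and>
     (\<exists>S. bounded_op sc ip S \<and> (\<forall>x. S (T x) = x) \<and> (\<forall>x. T (S x) = x))"

definition unitary_op ::
  "(complex \<Rightarrow> 'a::ab_group_add \<Rightarrow> 'a) \<Rightarrow> ('a \<Rightarrow> 'a \<Rightarrow> complex) \<Rightarrow> ('a \<Rightarrow> 'a) \<Rightarrow> bool" where
  "unitary_op sc ip U \<longleftrightarrow>
     bounded_op sc ip U \<and>
     (\<exists>U'. (\<forall>x y. ip (U x) y = ip x (U' y)) \<and> (\<forall>x. U' (U x) = x) \<and> (\<forall>x. U (U' x) = x))"

text \<open>An n-inner product is written nip x y zs = <x,y|z_2,...,z_n> with zs of length n-1.\<close>

definition lin_dep_list :: "(complex \<Rightarrow> 'a::ab_group_add \<Rightarrow> 'a) \<Rightarrow> 'a list \<Rightarrow> bool" where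
  "lin_dep_list sc xs \<longleftrightarrow>
     (\<exists>c::nat \<Rightarrow> complex. (\<exists>i<length xs. c i \<noteq> 0) \<and> (\<Sum>i<length xs. sc (c i) (xs ! i)) = 0)"

definition nnorm :: "('a \<Rightarrow> 'a \<Rightarrow> 'a list \<Rightarrow> complex) \<Rightarrow> 'a \<Rightarrow> 'a list \<Rightarrow> real" where
  "nnorm nip x zs = sqrt (Re (nip x x zs))"

definition n_inner_product_space ::
  "nat \<Rightarrow> (complex \<Rightarrow> 'a::ab_group_add \<Rightarrow> 'a) \<Rightarrow> ('a \<Rightarrow> 'a \<Rightarrow> 'a list \<Rightarrow> complex) \<Rightarrow> bool" where
  "n_inner_product_space n sc nip \<longleftrightarrow>
     n \<ge> 2 \<and> vector_space sc \<and>
     (\<exists>xs. length xs = n \<and> \<not> lin_dep_list sc xs) \<and>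
     (\<forall>x zs. length zs = n - 1 \<longrightarrow>
        Im (nip x x zs) = 0 \<and> Re (nip x x zs) \<ge> 0 \<and>
        (nip x x zs = 0 \<longleftrightarrow> lin_dep_list sc (x # zs))) \<and>
     (\<forall>x zs ys. length zs = n - 1 \<longrightarrow> mset ys = mset (x # zs) \<longrightarrow>
        nip (hd ys) (hd ys) (tl ys) = nip x x zs) \<and>
     (\<forall>x y zs. length zs = n - 1 \<longrightarrow> nip x y zs = cnj (nip y x zs)) \<and>
     (\<forall>a x y zs. length zs = n - 1 \<longrightarrow> nip (sc a x) y zs = a * nip x y zs) \<and>
     (\<forall>x x' y zs. length zs = n - 1 \<longrightarrow> nip (x + x') y zs = nip x y zs + nip x' y zs)"

definition n_hilbert_space ::
  "nat \<Rightarrow> (complex \<Rightarrow> 'a::ab_group_add \<Rightarrow> 'a) \<Rightarrow> ('a \<Rightarrow> 'a \<Rightarrow> 'a list \<Rightarrow> complex) \<Rightarrow> bool" where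
  "n_hilbert_space n sc nip \<longleftrightarrow>
     n_inner_product_space n sc nip \<and>
     (\<forall>X::nat \<Rightarrow> 'a.
        (\<forall>zs. length zs = n - 1 \<longrightarrow>
           (\<forall>e>0. \<exists>N. \<forall>m\<ge>N. \<forall>k\<ge>N. nnorm nip (X m - X k) zs < e)) \<longrightarrow>
        (\<exists>x. \<forall>zs. length zs = n - 1 \<longrightarrow> (\<lambda>k. nnorm nip (X k - x) zs) \<longlonglongrightarrow> 0))"

text \<open>(scF, ipF) is the Hilbert completion H_F of H/L_F: q is the canonical (linear) map
  H \<rightarrow> H_F, it carries the semi-inner product <x,y|a_2,...,a_n> to the inner product of H_F,
  and its range is dense.\<close>
definition F_completion ::
  "('h \<Rightarrow> 'h \<Rightarrow> 'h list \<Rightarrow> complex) \<Rightarrow> 'h list \<Rightarrow> (complex \<Rightarrow> 'h::ab_group_add \<Rightarrow> 'h) \<Rightarrow>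
   (complex \<Rightarrow> 'f::ab_group_add \<Rightarrow> 'f) \<Rightarrow> ('f \<Rightarrow> 'f \<Rightarrow> complex) \<Rightarrow> ('h \<Rightarrow> 'f) \<Rightarrow> bool" where
  "F_completion nip as scH scF ipF q \<longleftrightarrow>
     hilbert_space scF ipF \<and> Vector_Spaces.linear scH scF q \<and>
     (\<forall>x y. ipF (q x) (q y) = nip x y as) \<and>
     (\<forall>f e. e > 0 \<longrightarrow> (\<exists>x. cnorm ipF (f - q x) < e))"

text \<open>(scW, ipW) with tens is the Hilbert tensor product H_F \<otimes> K_G: tens is bilinear,
  <x\<otimes>y, x'\<otimes>y'> = <x,x'><y,y'>, and the span of elementary tensors is dense.\<close>
definition hilbert_tensor ::
  "(complex \<Rightarrow> 'f::ab_group_add \<Rightarrow> 'f) \<Rightarrow> ('f \<Rightarrow> 'f \<Rightarrow> complex) \<Rightarrow>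
   (complex \<Rightarrow> 'g::ab_group_add \<Rightarrow> 'g) \<Rightarrow> ('g \<Rightarrow> 'g \<Rightarrow> complex) \<Rightarrow>
   (complex \<Rightarrow> 'w::ab_group_add \<Rightarrow> 'w) \<Rightarrow> ('w \<Rightarrow> 'w \<Rightarrow> complex) \<Rightarrow> ('f \<Rightarrow> 'g \<Rightarrow> 'w) \<Rightarrow> bool" where
  "hilbert_tensor scF ipF scG ipG scW ipW tens \<longleftrightarrow>
     hilbert_space scF ipF \<and> hilbert_space scG ipG \<and> hilbert_space scW ipW \<and>
     (\<forall>y. Vector_Spaces.linear scF scW (\<lambda>x. tens x y)) \<and>
     (\<forall>x. Vector_Spaces.linear scG scW (tens x)) \<and>
     (\<forall>x y x' y'. ipW (tens x y) (tens x' y') = ipF x x' * ipG y y') \<and>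
     (\<forall>w e. e > 0 \<longrightarrow>
        (\<exists>p xs ys. cnorm ipW (w - (\<Sum>k<(p::nat). tens (xs k) (ys k))) < e))"

definition tensor_op ::
  "(complex \<Rightarrow> 'w::ab_group_add \<Rightarrow> 'w) \<Rightarrow> ('w \<Rightarrow> 'w \<Rightarrow> complex) \<Rightarrow> ('f \<Rightarrow> 'g \<Rightarrow> 'w) \<Rightarrow>
   ('f \<Rightarrow> 'f) \<Rightarrow> ('g \<Rightarrow> 'g) \<Rightarrow> 'w \<Rightarrow> 'w" where
  "tensor_op scW ipW tens Q R =
     (THE T. bounded_op scW ipW T \<and> (\<forall>x y. T (tens x y) = tens (Q x) (R y)))"

text \<open>phi i is the image in H_F of f_i \<in> H; the frame sum is an (ordered) series whose value
  is real and lies between the bounds.\<close>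
definition ctrl_frame ::
  "('f::ab_group_add \<Rightarrow> 'f \<Rightarrow> complex) \<Rightarrow> ('f \<Rightarrow> 'f) \<Rightarrow> (nat \<Rightarrow> 'f) \<Rightarrow> bool" where
  "ctrl_frame ip C phi \<longleftrightarrow>
     (\<exists>A B. 0 < A \<and> A \<le> B \<and>
        (\<forall>f. \<exists>s. (\<lambda>i. ip f (phi i) * ip (C (phi i)) f) sums s \<and> Im s = 0 \<and>
              A * (cnorm ip f)\<^sup>2 \<le> Re s \<and> Re s \<le> B * (cnorm ip f)\<^sup>2))"

definition dual_ctrl_frames ::
  "(complex \<Rightarrow> 'f::ab_group_add \<Rightarrow> 'f) \<Rightarrow> ('f \<Rightarrow> 'f \<Rightarrow> complex) \<Rightarrow> ('f \<Rightarrow> 'f) \<Rightarrow>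
   (nat \<Rightarrow> 'f) \<Rightarrow> (nat \<Rightarrow> 'f) \<Rightarrow> bool" where
  "dual_ctrl_frames sc ip C phi psi \<longleftrightarrow>
     ctrl_frame ip C phi \<and> ctrl_frame ip C psi \<and>
     (\<forall>f. sums_in (cnorm ip) (\<lambda>i. sc (ip f (psi i)) (C (phi i))) f)"

text \<open>Double-indexed families in the tensor product; the double series over (i,j) is read as
  the iterated series (sum over i of sum over j); test vectors are elementary tensors f\<otimes>g.\<close>
definition ctrl_frame2 ::
  "('w::ab_group_add \<Rightarrow> 'w \<Rightarrow> complex) \<Rightarrow> ('f \<Rightarrow> 'g \<Rightarrow> 'w) \<Rightarrow> ('w \<Rightarrow> 'w) \<Rightarrow>
   (nat \<Rightarrow> nat \<Rightarrow> 'w) \<Rightarrow> bool" where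
  "ctrl_frame2 ipW tens T phi \<longleftrightarrow>
     (\<exists>A B. 0 < A \<and> A \<le> B \<and>
        (\<forall>f g. \<exists>r s.
           (\<forall>i. (\<lambda>j. ipW (tens f g) (phi i j) * ipW (T (phi i j)) (tens f g)) sums r i) \<and>
           r sums s \<and> Im s = 0 \<and>
           A * (cnorm ipW (tens f g))\<^sup>2 \<le> Re s \<and> Re s \<le> B * (cnorm ipW (tens f g))\<^sup>2))"

definition dual_ctrl_frames2 ::
  "(complex \<Rightarrow> 'w::ab_group_add \<Rightarrow> 'w) \<Rightarrow> ('w \<Rightarrow> 'w \<Rightarrow> complex) \<Rightarrow> ('f \<Rightarrow> 'g \<Rightarrow> 'w) \<Rightarrow>
   ('w \<Rightarrow> 'w) \<Rightarrow> (nat \<Rightarrow> nat \<Rightarrow> 'w) \<Rightarrow> (nat \<Rightarrow> nat \<Rightarrow> 'w) \<Rightarrow> bool" where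
  "dual_ctrl_frames2 scW ipW tens T phi psi \<longleftrightarrow>
     ctrl_frame2 ipW tens T phi \<and> ctrl_frame2 ipW tens T psi \<and>
     (\<forall>f g. \<exists>r.
        (\<forall>i. sums_in (cnorm ipW) (\<lambda>j. scW (ipW (tens f g) (psi i j)) (T (phi i j))) (r i)) \<and>
        sums_in (cnorm ipW) r (tens f g))"

end

theory Submission
  imports Defs
begin

locale cis =
  fixes sc :: "complex \<Rightarrow> 'a::ab_group_add \<Rightarrow> 'a" and ip :: "'a \<Rightarrow> 'a \<Rightarrow> complex"
  assumes cis: "complex_inner_space sc ip"
begin

lemma vs: "vector_space sc" using cis unfolding complex_inner_space_def by blast

sublocale vector_space sc by (rule vs)

lemma ip_add_left: "ip (x + y) z = ip x z + ip y z"
  and ip_scale_left: "ip (sc a x) y = a * ip x y"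
  and ip_cnj: "ip y x = cnj (ip x y)"
  and ip_self_Im: "Im (ip x x) = 0"
  and ip_self_Re: "Re (ip x x) \<ge> 0"
  and ip_self_eq0: "ip x x = 0 \<Longrightarrow> x = 0"
  using cis unfolding complex_inner_space_def by blast+

lemma ip_add_right: "ip x (y + z) = ip x y + ip x z"
proof -
  have "ip x (y + z) = cnj (ip (y + z) x)" by (rule ip_cnj)
  also have "\<dots> = cnj (ip y x) + cnj (ip z x)" by (simp only: ip_add_left complex_cnj_add)
  also have "\<dots> = ip x y + ip x z" by (simp only: ip_cnj[of x y, symmetric] ip_cnj[of x z, symmetric])
  finally show ?thesis .
qed

lemma ip_scale_right: "ip x (sc a y) = cnj a * ip x y"
proof -
  have "ip x (sc a y) = cnj (ip (sc a y) x)" by (rule ip_cnj)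
  also have "\<dots> = cnj a * cnj (ip y x)" by (simp only: ip_scale_left complex_cnj_mult)
  also have "\<dots> = cnj a * ip x y" by (simp only: ip_cnj[of x y, symmetric])
  finally show ?thesis .
qed

lemma ip_zero_left[simp]: "ip 0 y = 0"
proof -
  have "ip (0 + 0) y = ip 0 y + ip 0 y" by (rule ip_add_left)
  then show ?thesis by simp
qed

lemma ip_zero_right[simp]: "ip x 0 = 0"
proof -
  have "ip x (0 + 0) = ip x 0 + ip x 0" by (rule ip_add_right)
  then show ?thesis by simp
qed

lemma ip_minus_left: "ip (- x) y = - ip x y"
proof -
  have "ip (x + - x) y = ip x y + ip (-x) y" by (rule ip_add_left)
  then have "ip x y + ip (-x) y = 0" by simp
  then show ?thesis by (simp add: add_eq_0_iff)
qed

lemma ip_minus_right: "ip x (- y) = - ip x y"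
proof -
  have "ip x (y + - y) = ip x y + ip x (-y)" by (rule ip_add_right)
  then have "ip x y + ip x (-y) = 0" by simp
  then show ?thesis by (simp add: add_eq_0_iff)
qed

lemma ip_diff_left: "ip (x - y) z = ip x z - ip y z"
  by (simp only: diff_conv_add_uminus ip_add_left ip_minus_left)

lemma ip_diff_right: "ip x (y - z) = ip x y - ip x z"
  by (simp only: diff_conv_add_uminus ip_add_right ip_minus_right)

lemma ip_self_real: "ip x x = complex_of_real (Re (ip x x))"
  using ip_self_Im[of x] by (simp add: complex_eq_iff)

lemma cnorm_nonneg: "cnorm ip x \<ge> 0" unfolding cnorm_def using ip_self_Re[of x] by simp

lemma mult_cnj: "a * cnj a = complex_of_real ((cmod a)\<^sup>2)"
  by (metis complex_norm_square of_real_power)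

lemma cnorm_sq: "(cnorm ip x)\<^sup>2 = Re (ip x x)"
  unfolding cnorm_def using ip_self_Re[of x] by simp

lemma ip_self_cnorm: "ip x x = complex_of_real ((cnorm ip x)\<^sup>2)"
  by (metis ip_self_real cnorm_sq)

lemma cnorm_eq0: "cnorm ip x = 0 \<longleftrightarrow> x = 0"
proof
  assume "cnorm ip x = 0"
  then have "ip x x = 0" using ip_self_cnorm[of x] by simp
  then show "x = 0" by (rule ip_self_eq0)
qed (simp add: cnorm_def)

lemma cnorm_zero[simp]: "cnorm ip 0 = 0" by (simp add: cnorm_def)

lemma cnorm_scale: "cnorm ip (sc a x) = cmod a * cnorm ip x"
proof -
  have "ip (sc a x) (sc a x) = a * cnj a * ip x x"
    by (simp add: ip_scale_left ip_scale_right)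
  also have "a * cnj a = complex_of_real ((cmod a)\<^sup>2)" by (rule mult_cnj)
  finally have "Re (ip (sc a x) (sc a x)) = (cmod a)\<^sup>2 * Re (ip x x)"
    using ip_self_Im[of x] by simp
  then show ?thesis unfolding cnorm_def by (simp add: real_sqrt_mult)
qed

lemma cnorm_minus: "cnorm ip (- x) = cnorm ip x"
  using cnorm_scale[of "-1" x] by simp

lemma cnorm_commute: "cnorm ip (x - y) = cnorm ip (y - x)"
  using cnorm_minus[of "x - y"] by simp

lemma cauchy_schwarz: "cmod (ip x y) \<le> cnorm ip x * cnorm ip y"
proof (cases "y = 0")
  case True then show ?thesis by (simp add: cnorm_nonneg)
next
  case False
  define p where "p = Re (ip y y)"
  define a where "a = ip x y"
  have pp: "p > 0"
  proof -
    have "ip y y \<noteq> 0" using False ip_self_eq0 by blast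
    then have "Re (ip y y) \<noteq> 0" using ip_self_real[of y] by (metis of_real_0)
    then show ?thesis using ip_self_Re[of y] unfolding p_def by linarith
  qed
  have iyy: "ip y y = complex_of_real p" unfolding p_def by (rule ip_self_real)
  define t where "t = a / complex_of_real p"
  have "ip (x - sc t y) (x - sc t y) = ip x x - cnj t * a - t * cnj a + t * cnj t * complex_of_real p"
  proof -
    have e1: "ip (x - sc t y) (x - sc t y) = (ip x x - ip x (sc t y)) - t * (ip y x - ip y (sc t y))"
      by (simp only: ip_diff_left ip_diff_right ip_scale_left) (simp add: algebra_simps)
    have e2: "ip x (sc t y) = cnj t * a" by (simp only: ip_scale_right a_def)
    have e3: "ip y (sc t y) = cnj t * complex_of_real p" by (simp only: ip_scale_right iyy)
    have e4: "ip y x = cnj a" unfolding a_def by (rule ip_cnj)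
    show ?thesis unfolding e1 e2 e3 e4 by (simp add: algebra_simps)
  qed
  also have "\<dots> = ip x x - complex_of_real ((cmod a)\<^sup>2 / p)"
  proof -
    have aa: "a * cnj a = complex_of_real ((cmod a)\<^sup>2)" by (rule mult_cnj)
    have cp: "complex_of_real p \<noteq> 0" using pp by simp
    have h1: "cnj t * a = complex_of_real ((cmod a)\<^sup>2 / p)"
    proof -
      have "cnj t * a = (a * cnj a) / complex_of_real p" unfolding t_def by (simp add: mult.commute)
      then show ?thesis using aa by simp
    qed
    have h2: "t * cnj a = complex_of_real ((cmod a)\<^sup>2 / p)"
    proof -
      have "t * cnj a = (a * cnj a) / complex_of_real p" unfolding t_def by simp
      then show ?thesis using aa by simp
    qed
    have h3: "t * cnj t * complex_of_real p = complex_of_real ((cmod a)\<^sup>2 / p)"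
    proof -
      have "t * cnj t * complex_of_real p = (a * cnj a) / complex_of_real p"
        unfolding t_def using cp by (simp add: power2_eq_square)
      then show ?thesis using aa by simp
    qed
    show ?thesis by (simp only: h1 h2 h3) simp
  qed
  finally have "Re (ip x x) - (cmod a)\<^sup>2 / p \<ge> 0"
    using ip_self_Re[of "x - sc t y"] by simp
  then have "(cmod a)\<^sup>2 \<le> Re (ip x x) * p" using pp by (simp add: field_simps)
  then have "(cmod a)\<^sup>2 \<le> (cnorm ip x * cnorm ip y)\<^sup>2"
    by (simp add: power_mult_distrib cnorm_sq p_def)
  then show ?thesis unfolding a_def
    using cnorm_nonneg[of x] cnorm_nonneg[of y] by (meson mult_nonneg_nonneg power2_le_imp_le)
qed

lemma cnorm_triangle: "cnorm ip (x + y) \<le> cnorm ip x + cnorm ip y"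
proof -
  have e: "ip (x + y) (x + y) = ip x x + (cnj (ip x y) + (ip x y + ip y y))"
    by (simp only: ip_add_left ip_add_right ip_cnj[of y x] add.assoc)
  have "Re (ip (x + y) (x + y)) = Re (ip x x) + 2 * Re (ip x y) + Re (ip y y)"
    unfolding e by simp
  also have "\<dots> \<le> (cnorm ip x)\<^sup>2 + 2 * (cnorm ip x * cnorm ip y) + (cnorm ip y)\<^sup>2"
    using cauchy_schwarz[of x y] complex_Re_le_cmod[of "ip x y"] unfolding cnorm_sq by linarith
  also have "\<dots> = (cnorm ip x + cnorm ip y)\<^sup>2" by (simp add: power2_eq_square algebra_simps)
  finally have "(cnorm ip (x + y))\<^sup>2 \<le> (cnorm ip x + cnorm ip y)\<^sup>2" unfolding cnorm_sq .
  then show ?thesis by (rule power2_le_imp_le) (simp add: add_nonneg_nonneg cnorm_nonneg)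
qed

lemma cnorm_diff_triangle: "cnorm ip (x - z) \<le> cnorm ip (x - y) + cnorm ip (y - z)"
  using cnorm_triangle[of "x - y" "y - z"] by simp

lemma pythagoras: "ip x y = 0 \<Longrightarrow> (cnorm ip (x + y))\<^sup>2 = (cnorm ip x)\<^sup>2 + (cnorm ip y)\<^sup>2"
proof -
  assume h: "ip x y = 0"
  have e: "ip (x + y) (x + y) = ip x x + (cnj (ip x y) + (ip x y + ip y y))"
    by (simp only: ip_add_left ip_add_right ip_cnj[of y x] add.assoc)
  show ?thesis unfolding cnorm_sq e h by simp
qed

end


locale tensor_setup =
  F: cis scF ipF + G: cis scG ipG + W: cis scW ipW
  for scF :: "complex \<Rightarrow> 'f::ab_group_add \<Rightarrow> 'f" and ipF
  and scG :: "complex \<Rightarrow> 'g::ab_group_add \<Rightarrow> 'g" and ipG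
  and scW :: "complex \<Rightarrow> 'w::ab_group_add \<Rightarrow> 'w" and ipW +
  fixes tens :: "'f \<Rightarrow> 'g \<Rightarrow> 'w"
  assumes tadd1: "tens (x + x') y = tens x y + tens x' y"
    and tsc1: "tens (scF a x) y = scW a (tens x y)"
    and tadd2: "tens x (y + y') = tens x y + tens x y'"
    and tsc2: "tens x (scG a y) = scW a (tens x y)"
    and tip: "ipW (tens x y) (tens x' y') = ipF x x' * ipG y y'"
begin

lemma tzero1[simp]: "tens 0 y = 0"
  using tsc1[of 0 0 y] by simp

lemma tzero2[simp]: "tens x 0 = 0"
  using tsc2[of x 0 0] by simp

lemma tminus1: "tens (- x) y = - tens x y"
  using tsc1[of "-1" x y] by simp

lemma tminus2: "tens x (- y) = - tens x y"
  using tsc2[of x "-1" y] by simp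

lemma tdiff2: "tens x (y - y') = tens x y - tens x y'"
  by (simp only: diff_conv_add_uminus tadd2 tminus2)

lemma cnorm_tens: "cnorm ipW (tens x y) = cnorm ipF x * cnorm ipG y"
proof -
  have "ipW (tens x y) (tens x y) = complex_of_real ((cnorm ipF x)\<^sup>2 * (cnorm ipG y)\<^sup>2)"
    by (simp add: tip F.ip_self_cnorm[of x] G.ip_self_cnorm[of y])
  then have "(cnorm ipW (tens x y))\<^sup>2 = (cnorm ipF x * cnorm ipG y)\<^sup>2"
    by (simp add: W.cnorm_sq power_mult_distrib)
  then show ?thesis
    using W.cnorm_nonneg F.cnorm_nonneg G.cnorm_nonneg
    by (metis mult_nonneg_nonneg power2_eq_imp_eq)
qed

definition sT :: "('f \<times> 'g) list \<Rightarrow> 'w" where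
  "sT L = sum_list (map (\<lambda>(x, y). tens x y) L)"

lemma sT_Nil[simp]: "sT [] = 0" by (simp add: sT_def)
lemma sT_Cons[simp]: "sT ((x, y) # L) = tens x y + sT L" by (simp add: sT_def)
lemma sT_append: "sT (L1 @ L2) = sT L1 + sT L2" by (simp add: sT_def)

lemma sT_decomp:
  "sT L = sT (map (\<lambda>(x, y). (x, y - scG (c y) y0)) L)
          + tens (sum_list (map (\<lambda>(x, y). scF (c y) x) L)) y0"
proof (induction L)
  case Nil then show ?case by simp
next
  case (Cons p L)
  obtain x y where p: "p = (x, y)" by (cases p)
  have "tens x y = tens x (y - scG (c y) y0) + tens (scF (c y) x) y0"
    by (simp add: tdiff2 tsc1 tsc2)
  then show ?case using Cons by (simp add: p tadd1 algebra_simps)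
qed

lemma ip_sT_orth:
  assumes "\<forall>(x, y) \<in> set K. ipG y y0 = 0"
  shows "ipW (sT K) (tens z y0) = 0"
  using assms
proof (induction K)
  case Nil then show ?case by simp
next
  case (Cons p K)
  obtain x y where p: "p = (x, y)" by (cases p)
  then show ?case using Cons by (simp add: W.ip_add_left tip)
qed

lemma bound1:
  assumes Qadd: "\<And>x x'. Q (x + x') = Q x + Q x'"
    and Qsc: "\<And>a x. Q (scF a x) = scF a (Q x)"
    and Qb: "\<And>x. cnorm ipF (Q x) \<le> M * cnorm ipF x"
    and M: "M \<ge> 0"
  shows "(cnorm ipW (sT (map (\<lambda>(x, y). (Q x, y)) L)))\<^sup>2 \<le> M\<^sup>2 * (cnorm ipW (sT L))\<^sup>2"
proof (induction L rule: length_induct)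
  case (1 L)
  show ?case
  proof (cases L)
    case Nil then show ?thesis by simp
  next
    case (Cons p L')
    obtain x0 y0 where p: "p = (x0, y0)" by (cases p)
    have IH: "\<And>K. length K < length L \<Longrightarrow>
       (cnorm ipW (sT (map (\<lambda>(x, y). (Q x, y)) K)))\<^sup>2 \<le> M\<^sup>2 * (cnorm ipW (sT K))\<^sup>2"
      using 1 by blast
    show ?thesis
    proof (cases "y0 = 0")
      case True
      then show ?thesis using IH[of L'] by (simp add: Cons p)
    next
      case False
      define pp where "pp = ipG y0 y0"
      have ppnz: "pp \<noteq> 0" using False G.ip_self_eq0[of y0] unfolding pp_def by blast
      define c where "c = (\<lambda>y. ipG y y0 / pp)"
      define L'' where "L'' = map (\<lambda>(x, y). (x, y - scG (c y) y0)) L'"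
      define S where "S = sum_list (map (\<lambda>(x, y). scF (c y) x) L')"
      define z where "z = x0 + S"
      have Q0: "Q 0 = 0" using Qadd[of 0 0] by simp
      have QS: "Q S = sum_list (map (\<lambda>(x, y). scF (c y) x) (map (\<lambda>(x, y). (Q x, y)) L'))"
        unfolding S_def
        by (induction L') (auto simp: Q0 Qadd Qsc)
      have eL: "sT L = sT L'' + tens z y0"
        using sT_decomp[of L' c y0] by (simp add: Cons p L''_def z_def S_def tadd1 algebra_simps)
      have mapL'': "map (\<lambda>(x, y). (Q x, y)) L'' =
          map (\<lambda>(x, y). (x, y - scG (c y) y0)) (map (\<lambda>(x, y). (Q x, y)) L')"
        unfolding L''_def by (induction L') auto
      have eQL: "sT (map (\<lambda>(x, y). (Q x, y)) L) = sT (map (\<lambda>(x, y). (Q x, y)) L'') + tens (Q z) y0"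
        using sT_decomp[of "map (\<lambda>(x, y). (Q x, y)) L'" c y0]
        by (simp add: Cons p mapL'' z_def QS Qadd tadd1 algebra_simps)
      have orth: "\<forall>(x, y) \<in> set L''. ipG y y0 = 0"
      proof -
        have "ipG (y - scG (c y) y0) y0 = 0" for y
          using ppnz by (simp add: G.ip_diff_left G.ip_scale_left c_def pp_def[symmetric])
        then show ?thesis unfolding L''_def by auto
      qed
      have orthQ: "\<forall>(x, y) \<in> set (map (\<lambda>(x, y). (Q x, y)) L''). ipG y y0 = 0"
        using orth by auto
      have lenL'': "length L'' < length L" by (simp add: L''_def Cons)
      have n1: "(cnorm ipW (sT L))\<^sup>2 = (cnorm ipW (sT L''))\<^sup>2 + (cnorm ipF z * cnorm ipG y0)\<^sup>2"
        unfolding eL by (simp add: W.pythagoras ip_sT_orth[OF orth] cnorm_tens)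
      have n2: "(cnorm ipW (sT (map (\<lambda>(x, y). (Q x, y)) L)))\<^sup>2 =
           (cnorm ipW (sT (map (\<lambda>(x, y). (Q x, y)) L'')))\<^sup>2 + (cnorm ipF (Q z) * cnorm ipG y0)\<^sup>2"
        unfolding eQL by (simp add: W.pythagoras ip_sT_orth[OF orthQ] cnorm_tens)
      have qz: "(cnorm ipF (Q z) * cnorm ipG y0)\<^sup>2 \<le> M\<^sup>2 * (cnorm ipF z * cnorm ipG y0)\<^sup>2"
      proof -
        have "cnorm ipF (Q z) * cnorm ipG y0 \<le> M * (cnorm ipF z * cnorm ipG y0)"
          using mult_right_mono[OF Qb[of z] G.cnorm_nonneg[of y0]] by (simp add: mult.assoc)
        then have "(cnorm ipF (Q z) * cnorm ipG y0)\<^sup>2 \<le> (M * (cnorm ipF z * cnorm ipG y0))\<^sup>2"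
          by (rule power_mono) (simp add: F.cnorm_nonneg G.cnorm_nonneg)
        then show ?thesis by (simp add: power_mult_distrib)
      qed
      show ?thesis unfolding n1 n2 using IH[OF lenL''] qz by (simp add: algebra_simps)
    qed
  qed
qed

end


lemma cnorm_small_eq0:
  assumes "\<And>e. e > 0 \<Longrightarrow> cnorm ip x < e" and "cis sc ip"
  shows "x = 0"
proof -
  interpret cis sc ip by fact
  have "cnorm ip x \<le> 0"
    by (rule field_le_epsilon) (use assms(1) in force)
  then have "cnorm ip x = 0" using cnorm_nonneg[of x] by linarith
  then show ?thesis using cnorm_eq0 by blast
qed

locale tensor_ops = tensor_setup scF ipF scG ipG scW ipW tens
  for scF :: "complex \<Rightarrow> 'f::ab_group_add \<Rightarrow> 'f" and ipF
  and scG :: "complex \<Rightarrow> 'g::ab_group_add \<Rightarrow> 'g" and ipG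
  and scW :: "complex \<Rightarrow> 'w::ab_group_add \<Rightarrow> 'w" and ipW and tens +
  fixes Q :: "'f::ab_group_add \<Rightarrow> 'f" and R :: "'g::ab_group_add \<Rightarrow> 'g" and MQ MR :: real
  assumes Qadd: "Q (x + x') = Q x + Q x'" and Qsc: "Q (scF a x) = scF a (Q x)"
    and Qb: "cnorm ipF (Q x) \<le> MQ * cnorm ipF x" and MQ: "MQ \<ge> 0"
    and Radd: "R (y + y') = R y + R y'" and Rsc: "R (scG a y) = scG a (R y)"
    and Rb: "cnorm ipG (R y) \<le> MR * cnorm ipG y" and MR: "MR \<ge> 0"
    and dense: "e > 0 \<Longrightarrow> \<exists>L. cnorm ipW (w - sT L) < e"
    and complete: "hilbert_space scW ipW"
begin

definition mQR where "mQR L = map (\<lambda>(x, y). (Q x, R y)) L"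

lemma Q0: "Q 0 = 0" using Qadd[of 0 0] by simp
lemma Qminus: "Q (- x) = - Q x" using Qsc[of "-1" x] by simp

definition "MM = MQ * MR"
lemma MM: "MM \<ge> 0" unfolding MM_def using MQ MR by simp

lemma flip_setup: "tensor_setup scG ipG scF ipF scW ipW (\<lambda>y x. tens x y)"
  unfolding tensor_setup_def tensor_setup_axioms_def
  by (simp add: G.cis_axioms F.cis_axioms W.cis_axioms tadd1 tadd2 tsc1 tsc2 tip mult.commute)

lemma bound2: "cnorm ipW (sT (mQR L)) \<le> MM * cnorm ipW (sT L)"
proof -
  interpret flip: tensor_setup scG ipG scF ipF scW ipW "\<lambda>y x. tens x y" by (rule flip_setup)
  have sw: "flip.sT (map prod.swap K) = sT K" for K
    by (induction K) (auto simp: flip.sT_def sT_def)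
  have h1: "(cnorm ipW (flip.sT (map (\<lambda>(y, x). (R y, x)) (map prod.swap L))))\<^sup>2
        \<le> MR\<^sup>2 * (cnorm ipW (flip.sT (map prod.swap L)))\<^sup>2"
    by (rule flip.bound1) (auto simp: Radd Rsc Rb MR)
  have eq: "map (\<lambda>(y, x). (R y, x)) (map prod.swap L) = map prod.swap (map (\<lambda>(x, y). (x, R y)) L)"
    by (induction L) auto
  have s1: "(cnorm ipW (sT (map (\<lambda>(x, y). (x, R y)) L)))\<^sup>2 \<le> MR\<^sup>2 * (cnorm ipW (sT L))\<^sup>2"
    using h1 unfolding eq sw .
  have s2: "(cnorm ipW (sT (map (\<lambda>(x, y). (Q x, y)) (map (\<lambda>(x, y). (x, R y)) L))))\<^sup>2
     \<le> MQ\<^sup>2 * (cnorm ipW (sT (map (\<lambda>(x, y). (x, R y)) L)))\<^sup>2"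
    by (rule bound1) (auto simp: Qadd Qsc Qb MQ)
  have e: "map (\<lambda>(x, y). (Q x, y)) (map (\<lambda>(x, y). (x, R y)) L) = mQR L"
    unfolding mQR_def by (induction L) auto
  have "(cnorm ipW (sT (mQR L)))\<^sup>2 \<le> MQ\<^sup>2 * (MR\<^sup>2 * (cnorm ipW (sT L))\<^sup>2)"
    using s2 unfolding e using s1 by (meson mult_left_mono order_trans zero_le_power2)
  also have "\<dots> = (MM * cnorm ipW (sT L))\<^sup>2" by (simp add: MM_def power_mult_distrib)
  finally show ?thesis
    by (rule power2_le_imp_le) (simp add: MM W.cnorm_nonneg)
qed

definition negL :: "('f \<times> 'g) list \<Rightarrow> ('f \<times> 'g) list" where
  "negL L = map (\<lambda>(x, y). (- x, y)) L"

lemma sT_negL: "sT (negL L) = - sT L"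
  unfolding negL_def by (induction L) (auto simp: tminus1)

lemma mQR_negL: "mQR (negL L) = negL (mQR L)"
  unfolding negL_def mQR_def by (induction L) (auto simp: Qminus)

lemma mQR_append: "mQR (L1 @ L2) = mQR L1 @ mQR L2"
  unfolding mQR_def by simp

lemma lip: "cnorm ipW (sT (mQR L1) - sT (mQR L2)) \<le> MM * cnorm ipW (sT L1 - sT L2)"
  using bound2[of "L1 @ negL L2"]
  by (simp add: mQR_append sT_append mQR_negL sT_negL)

definition scL :: "complex \<Rightarrow> ('f \<times> 'g) list \<Rightarrow> ('f \<times> 'g) list" where
  "scL a L = map (\<lambda>(x, y). (scF a x, y)) L"

lemma sT_scL: "sT (scL a L) = scW a (sT L)"
  unfolding scL_def by (induction L) (auto simp: tsc1 W.scale_right_distrib)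

lemma mQR_scL: "mQR (scL a L) = scL a (mQR L)"
  unfolding scL_def mQR_def by (induction L) (auto simp: Qsc)

definition Lim :: "'w \<Rightarrow> 'w \<Rightarrow> bool" where
  "Lim w l \<longleftrightarrow> (\<forall>e>0. \<exists>d>0. \<forall>L. cnorm ipW (w - sT L) < d \<longrightarrow> cnorm ipW (sT (mQR L) - l) < e)"

lemma Lim_exists: "\<exists>l. Lim w l"
proof -
  have "\<forall>m. \<exists>L. cnorm ipW (w - sT L) < 1 / (real m + 1)"
    using dense by simp
  then obtain Ls where Ls: "\<And>m. cnorm ipW (w - sT (Ls m)) < 1 / (real m + 1)"
    by metis
  define X where "X m = sT (mQR (Ls m))" for m
  have Xd: "cnorm ipW (X m - X k) \<le> MM * (1 / (real m + 1) + 1 / (real k + 1))" for m k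
  proof -
    have "cnorm ipW (sT (Ls m) - sT (Ls k)) \<le> cnorm ipW (sT (Ls m) - w) + cnorm ipW (w - sT (Ls k))"
      by (rule W.cnorm_diff_triangle)
    also have "\<dots> \<le> 1 / (real m + 1) + 1 / (real k + 1)"
      using Ls[of m] Ls[of k] W.cnorm_commute[of "sT (Ls m)" w] by linarith
    finally show ?thesis unfolding X_def using lip[of "Ls m" "Ls k"] MM
      by (meson mult_left_mono order_trans)
  qed
  have cauchy: "\<forall>e>0. \<exists>N. \<forall>m\<ge>N. \<forall>k\<ge>N. cnorm ipW (X m - X k) < e"
  proof (intro allI impI)
    fix e :: real assume e: "e > 0"
    obtain N :: nat where N: "2 * (MM + 1) / e < real N" using reals_Archimedean2 by blast
    have Npos: "real N > 0" using N e MM by (smt (verit) divide_pos_pos)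
    have key: "MM * (2 / (real N + 1)) < e"
    proof -
      have "2 * (MM + 1) < e * real N" using N e by (simp add: field_simps)
      then have "2 * MM < e * (real N + 1)" using e by (simp add: algebra_simps)
      then show ?thesis using Npos by (simp add: field_simps)
    qed
    show "\<exists>N. \<forall>m\<ge>N. \<forall>k\<ge>N. cnorm ipW (X m - X k) < e"
    proof (intro exI allI impI)
      fix m k assume m: "m \<ge> N" and k: "k \<ge> N"
      have "1 / (real m + 1) \<le> 1 / (real N + 1)" using m by (simp add: frac_le)
      moreover have "1 / (real k + 1) \<le> 1 / (real N + 1)" using k by (simp add: frac_le)
      ultimately have "MM * (1 / (real m + 1) + 1 / (real k + 1)) \<le> MM * (2 / (real N + 1))"
        using MM by (intro mult_left_mono) auto
      then show "cnorm ipW (X m - X k) < e" using Xd[of m k] key by linarith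
    qed
  qed
  then obtain l where l: "(\<lambda>k. cnorm ipW (X k - l)) \<longlonglongrightarrow> 0"
    using complete unfolding hilbert_space_def by blast
  have "Lim w l"
    unfolding Lim_def
  proof (intro allI impI)
    fix e :: real assume e: "e > 0"
    obtain m0 where m0: "\<And>k. k \<ge> m0 \<Longrightarrow> cnorm ipW (X k - l) < e / 3"
      using LIMSEQ_D[OF l, of "e / 3"] e W.cnorm_nonneg by auto
    obtain N :: nat where N: "3 * (MM + 1) / e < real N" using reals_Archimedean2 by blast
    define m where "m = max m0 N"
    have mN: "real N \<le> real m" unfolding m_def by simp
    have km: "MM * (1 / (real m + 1)) < e / 3"
    proof -
      have "3 * (MM + 1) < e * real N" using N e by (simp add: field_simps)
      then have "3 * (MM + 1) < e * (real m + 1)" using mN e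
        by (smt (verit) mult_left_mono)
      then have "3 * MM < e * (real m + 1)" by (simp add: algebra_simps)
      then show ?thesis by (simp add: field_simps)
    qed
    define d where "d = e / (3 * (MM + 1))"
    have d: "d > 0" using e MM unfolding d_def by simp
    have Md: "MM * d < e / 3"
    proof -
      have "MM * d = e / 3 * (MM / (MM + 1))" unfolding d_def using MM by (simp add: field_simps)
      also have "\<dots> < e / 3" using MM e by (simp add: field_simps)
      finally show ?thesis .
    qed
    show "\<exists>d>0. \<forall>L. cnorm ipW (w - sT L) < d \<longrightarrow> cnorm ipW (sT (mQR L) - l) < e"
    proof (intro exI conjI allI impI)
      show "d > 0" by fact
      fix L assume L: "cnorm ipW (w - sT L) < d"
      have "cnorm ipW (sT L - sT (Ls m)) \<le> cnorm ipW (sT L - w) + cnorm ipW (w - sT (Ls m))"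
        by (rule W.cnorm_diff_triangle)
      also have "\<dots> < d + 1 / (real m + 1)"
        using L Ls[of m] W.cnorm_commute[of "sT L" w] by linarith
      finally have a: "cnorm ipW (sT L - sT (Ls m)) < d + 1 / (real m + 1)" .
      have b: "cnorm ipW (sT (mQR L) - X m) \<le> MM * (d + 1 / (real m + 1))"
        unfolding X_def using lip[of L "Ls m"] a MM
        by (meson less_imp_le mult_left_mono order_trans)
      have c: "cnorm ipW (X m - l) < e / 3" using m0[of m] unfolding m_def by simp
      have "cnorm ipW (sT (mQR L) - l) \<le> cnorm ipW (sT (mQR L) - X m) + cnorm ipW (X m - l)"
        by (rule W.cnorm_diff_triangle)
      also have "\<dots> < e"
      proof -
        have b': "cnorm ipW (sT (mQR L) - X m) \<le> MM * d + MM * (1 / (real m + 1))"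
          using b by (simp only: distrib_left)
        show ?thesis using b' c Md km by linarith
      qed
      finally show "cnorm ipW (sT (mQR L) - l) < e" .
    qed
  qed
  then show ?thesis by blast
qed


lemma small_eq0: "(\<And>e. e > 0 \<Longrightarrow> cnorm ipW x < e) \<Longrightarrow> x = 0"
  by (rule cnorm_small_eq0[where ip=ipW and sc=scW]) (auto simp: W.cis_axioms)

lemma eq_by_small: "(\<And>e. e > 0 \<Longrightarrow> cnorm ipW (x - y) < e) \<Longrightarrow> x = y"
  using small_eq0[of "x - y"] by simp

lemma Lim_unique:
  assumes "Lim w l1" "Lim w l2" shows "l1 = l2"
proof (rule eq_by_small)
  fix e :: real assume e: "e > 0"
  obtain d1 where d1: "d1 > 0" "\<And>L. cnorm ipW (w - sT L) < d1 \<Longrightarrow> cnorm ipW (sT (mQR L) - l1) < e / 2"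
    using assms(1) e unfolding Lim_def by (meson half_gt_zero)
  obtain d2 where d2: "d2 > 0" "\<And>L. cnorm ipW (w - sT L) < d2 \<Longrightarrow> cnorm ipW (sT (mQR L) - l2) < e / 2"
    using assms(2) e unfolding Lim_def by (meson half_gt_zero)
  obtain L where L: "cnorm ipW (w - sT L) < min d1 d2" using dense[of "min d1 d2" w] d1 d2 by auto
  have "cnorm ipW (l1 - l2) \<le> cnorm ipW (l1 - sT (mQR L)) + cnorm ipW (sT (mQR L) - l2)"
    by (rule W.cnorm_diff_triangle)
  also have "\<dots> < e" using d1(2)[of L] d2(2)[of L] L W.cnorm_commute[of l1 "sT (mQR L)"] by simp
  finally show "cnorm ipW (l1 - l2) < e" .
qed

lemma Lim_sT: "Lim (sT L) l \<Longrightarrow> l = sT (mQR L)"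
proof -
  assume h: "Lim (sT L) l"
  show ?thesis
  proof (rule eq_by_small)
    fix e :: real assume e: "e > 0"
    then obtain d where "d > 0" "\<And>L'. cnorm ipW (sT L - sT L') < d \<Longrightarrow> cnorm ipW (sT (mQR L') - l) < e"
      using h unfolding Lim_def by blast
    then have "cnorm ipW (sT (mQR L) - l) < e" by simp
    then show "cnorm ipW (l - sT (mQR L)) < e" using W.cnorm_commute by simp
  qed
qed

lemma Lim_add:
  assumes "Lim w1 l1" "Lim w2 l2" "Lim (w1 + w2) l" shows "l = l1 + l2"
proof (rule eq_by_small)
  fix e :: real assume e: "e > 0"
  obtain d1 where d1: "d1 > 0" "\<And>L. cnorm ipW (w1 - sT L) < d1 \<Longrightarrow> cnorm ipW (sT (mQR L) - l1) < e / 3"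
    using assms(1) e unfolding Lim_def by (meson divide_pos_pos zero_less_numeral)
  obtain d2 where d2: "d2 > 0" "\<And>L. cnorm ipW (w2 - sT L) < d2 \<Longrightarrow> cnorm ipW (sT (mQR L) - l2) < e / 3"
    using assms(2) e unfolding Lim_def by (meson divide_pos_pos zero_less_numeral)
  obtain d where d: "d > 0" "\<And>L. cnorm ipW ((w1 + w2) - sT L) < d \<Longrightarrow> cnorm ipW (sT (mQR L) - l) < e / 3"
    using assms(3) e unfolding Lim_def by (meson divide_pos_pos zero_less_numeral)
  obtain L1 where L1: "cnorm ipW (w1 - sT L1) < min d1 (d / 2)" using dense d1 d by (meson half_gt_zero min_less_iff_conj)
  obtain L2 where L2: "cnorm ipW (w2 - sT L2) < min d2 (d / 2)" using dense d2 d by (meson half_gt_zero min_less_iff_conj)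
  have "cnorm ipW ((w1 + w2) - sT (L1 @ L2)) \<le> cnorm ipW (w1 - sT L1) + cnorm ipW (w2 - sT L2)"
    using W.cnorm_triangle[of "w1 - sT L1" "w2 - sT L2"] by (simp add: sT_append algebra_simps)
  also have "\<dots> < d" using L1 L2 by simp
  finally have a: "cnorm ipW (sT (mQR (L1 @ L2)) - l) < e / 3" using d(2) by blast
  have b: "cnorm ipW (sT (mQR L1) - l1) < e / 3" using d1(2) L1 by simp
  have c: "cnorm ipW (sT (mQR L2) - l2) < e / 3" using d2(2) L2 by simp
  have "cnorm ipW (l - (l1 + l2)) \<le> cnorm ipW (l - sT (mQR (L1 @ L2))) + cnorm ipW (sT (mQR (L1 @ L2)) - (l1 + l2))"
    by (rule W.cnorm_diff_triangle)
  also have "cnorm ipW (sT (mQR (L1 @ L2)) - (l1 + l2)) \<le> cnorm ipW (sT (mQR L1) - l1) + cnorm ipW (sT (mQR L2) - l2)"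
    using W.cnorm_triangle[of "sT (mQR L1) - l1" "sT (mQR L2) - l2"]
    by (simp add: mQR_append sT_append algebra_simps)
  finally show "cnorm ipW (l - (l1 + l2)) < e"
    using a b c W.cnorm_commute[of l "sT (mQR (L1 @ L2))"] by linarith
qed

lemma Lim_scale:
  assumes "Lim w l1" "Lim (scW a w) l" shows "l = scW a l1"
proof (rule eq_by_small)
  fix e :: real assume e: "e > 0"
  define k where "k = cmod a + 1"
  have k: "k > 0" "cmod a < k" unfolding k_def by (simp_all add: add_nonneg_pos)
  obtain d1 where d1: "d1 > 0" "\<And>L. cnorm ipW (w - sT L) < d1 \<Longrightarrow> cnorm ipW (sT (mQR L) - l1) < e / (2 * k)"
  proof -
    have "e / (2 * k) > 0" using e k by simp
    then show ?thesis using assms(1) that unfolding Lim_def by blast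
  qed
  obtain d where d: "d > 0" "\<And>L. cnorm ipW (scW a w - sT L) < d \<Longrightarrow> cnorm ipW (sT (mQR L) - l) < e / 2"
    using assms(2) e unfolding Lim_def by (meson half_gt_zero)
  have "min d1 (d / k) > 0" using d1 d k by simp
  then obtain L1 where L1: "cnorm ipW (w - sT L1) < min d1 (d / k)" using dense by blast
  have "cnorm ipW (scW a w - sT (scL a L1)) = cmod a * cnorm ipW (w - sT L1)"
    by (simp add: sT_scL W.scale_right_diff_distrib[symmetric] W.cnorm_scale)
  also have "\<dots> \<le> k * cnorm ipW (w - sT L1)" using k W.cnorm_nonneg by (simp add: mult_right_mono)
  also have "\<dots> < k * (d / k)"
  proof -
    have "cnorm ipW (w - sT L1) < d / k" using L1 by simp
    then show ?thesis using mult_strict_left_mono k(1) by blast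
  qed
  also have "\<dots> = d" using k by simp
  finally have a: "cnorm ipW (sT (mQR (scL a L1)) - l) < e / 2" using d(2) by blast
  have "cnorm ipW (sT (mQR (scL a L1)) - scW a l1) = cmod a * cnorm ipW (sT (mQR L1) - l1)"
    by (simp add: mQR_scL sT_scL W.scale_right_diff_distrib[symmetric] W.cnorm_scale)
  also have "\<dots> \<le> k * cnorm ipW (sT (mQR L1) - l1)" using k W.cnorm_nonneg by (simp add: mult_right_mono)
  also have "\<dots> \<le> k * (e / (2 * k))"
  proof -
    have "cnorm ipW (sT (mQR L1) - l1) \<le> e / (2 * k)" using d1(2)[of L1] L1 by simp
    then show ?thesis using mult_left_mono k(1) by (meson less_imp_le)
  qed
  also have "\<dots> = e / 2" using k by simp
  finally have b: "cnorm ipW (sT (mQR (scL a L1)) - scW a l1) \<le> e / 2" .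
  have "cnorm ipW (l - scW a l1) \<le> cnorm ipW (l - sT (mQR (scL a L1))) + cnorm ipW (sT (mQR (scL a L1)) - scW a l1)"
    by (rule W.cnorm_diff_triangle)
  then show "cnorm ipW (l - scW a l1) < e"
    using a b W.cnorm_commute[of l "sT (mQR (scL a L1))"] by linarith
qed

definition Text :: "'w \<Rightarrow> 'w" where "Text w = (SOME l. Lim w l)"

lemma Lim_Text: "Lim w (Text w)"
  unfolding Text_def using Lim_exists by (rule someI_ex)

lemma Text_add: "Text (w1 + w2) = Text w1 + Text w2"
  using Lim_add[OF Lim_Text Lim_Text Lim_Text] .

lemma Text_scale: "Text (scW a w) = scW a (Text w)"
  using Lim_scale[OF Lim_Text Lim_Text] .

lemma Text_tens: "Text (tens x y) = tens (Q x) (R y)"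
  using Lim_sT[of "[(x, y)]" "Text (tens x y)"] Lim_Text[of "tens x y"]
  by (simp add: mQR_def)

lemma Text_bound: "cnorm ipW (Text w) \<le> MM * cnorm ipW w"
proof (rule field_le_epsilon)
  fix e :: real assume e: "e > 0"
  obtain d where d: "d > 0" "\<And>L. cnorm ipW (w - sT L) < d \<Longrightarrow> cnorm ipW (sT (mQR L) - Text w) < e / 2"
    using Lim_Text[of w] e unfolding Lim_def by (meson half_gt_zero)
  define d' where "d' = min d (e / (2 * (MM + 1)))"
  have d': "d' > 0" "d' \<le> d" "d' \<le> e / (2 * (MM + 1))" unfolding d'_def using d e MM by auto
  obtain L where L: "cnorm ipW (w - sT L) < d'" using dense d' by blast
  have a: "cnorm ipW (sT (mQR L) - Text w) < e / 2" using d(2) L d' by simp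
  have "cnorm ipW (sT L) \<le> cnorm ipW w + cnorm ipW (sT L - w)"
    using W.cnorm_triangle[of w "sT L - w"] by simp
  also have "\<dots> \<le> cnorm ipW w + d'" using L W.cnorm_commute[of "sT L" w] by simp
  finally have b: "MM * cnorm ipW (sT L) \<le> MM * cnorm ipW w + MM * d'"
    using MM by (metis distrib_left mult_left_mono)
  have "MM * d' \<le> MM * (e / (2 * (MM + 1)))" using mult_left_mono[OF d'(3) MM] .
  also have "\<dots> \<le> e / 2" using MM e by (simp add: field_simps)
  finally have c: "MM * d' \<le> e / 2" .
  have "cnorm ipW (Text w) \<le> cnorm ipW (sT (mQR L)) + cnorm ipW (Text w - sT (mQR L))"
    using W.cnorm_triangle[of "sT (mQR L)" "Text w - sT (mQR L)"] by simp
  then show "cnorm ipW (Text w) \<le> MM * cnorm ipW w + e"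
    using a b c bound2[of L] W.cnorm_commute[of "Text w" "sT (mQR L)"] by linarith
qed

lemma Text_bounded_op: "bounded_op scW ipW Text"
proof -
  have "Vector_Spaces.linear scW scW Text"
    by (rule iffD2[OF Vector_Spaces.linear_iff]) (use W.vs Text_add Text_scale in blast)
  then show ?thesis unfolding bounded_op_def using Text_bound by blast
qed

lemma bounded_op_sT:
  assumes "bounded_op scW ipW T" "\<And>x y. T (tens x y) = tens (Q x) (R y)"
  shows "T (sT L) = sT (mQR L)"
proof -
  have add: "T (a + b) = T a + T b" for a b using assms(1) unfolding bounded_op_def by (meson Vector_Spaces.linear_iff)
  have z: "T 0 = 0" using add[of 0 0] by simp
  show ?thesis unfolding mQR_def by (induction L) (auto simp: add z assms(2))
qed

lemma bounded_op_abs: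
  assumes "bounded_op scW ipW T" shows "\<exists>M\<ge>0. \<forall>x. cnorm ipW (T x) \<le> M * cnorm ipW x"
proof -
  obtain M where M: "\<forall>x. cnorm ipW (T x) \<le> M * cnorm ipW x" using assms unfolding bounded_op_def by blast
  have "\<forall>x. cnorm ipW (T x) \<le> \<bar>M\<bar> * cnorm ipW x"
    using M W.cnorm_nonneg by (meson abs_ge_self mult_right_mono order_trans)
  then show ?thesis by (intro exI[of _ "\<bar>M\<bar>"]) auto
qed

lemma bounded_op_diff:
  assumes "bounded_op scW ipW T" shows "T (a - b) = T a - T b"
proof -
  have add: "T (a + b) = T a + T b" for a b using assms(1) unfolding bounded_op_def by (meson Vector_Spaces.linear_iff)
  interpret additive T by standard (rule add)
  show ?thesis by (rule diff)
qed

lemma uniq: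
  assumes T1: "bounded_op scW ipW T1" "\<And>x y. T1 (tens x y) = tens (Q x) (R y)"
    and T2: "bounded_op scW ipW T2" "\<And>x y. T2 (tens x y) = tens (Q x) (R y)"
  shows "T1 = T2"
proof
  fix w
  obtain M1 where M1: "M1 \<ge> 0" "\<And>x. cnorm ipW (T1 x) \<le> M1 * cnorm ipW x" using bounded_op_abs[OF T1(1)] by blast
  obtain M2 where M2: "M2 \<ge> 0" "\<And>x. cnorm ipW (T2 x) \<le> M2 * cnorm ipW x" using bounded_op_abs[OF T2(1)] by blast
  show "T1 w = T2 w"
  proof (rule eq_by_small)
    fix e :: real assume e: "e > 0"
    define k where "k = M1 + M2 + 1"
    have k: "k > 0" unfolding k_def using M1 M2 by simp
    obtain L where L: "cnorm ipW (w - sT L) < e / k" using dense k e by (meson divide_pos_pos)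
    have tri: "cnorm ipW (T1 w - T2 w) \<le> cnorm ipW (T1 w - T1 (sT L)) + cnorm ipW (T1 (sT L) - T2 w)"
      by (rule W.cnorm_diff_triangle)
    have eqL: "T1 (sT L) = T2 (sT L)" using bounded_op_sT[OF T1] bounded_op_sT[OF T2] by simp
    have a1: "cnorm ipW (T1 w - T1 (sT L)) \<le> M1 * cnorm ipW (w - sT L)"
      using M1(2)[of "w - sT L"] by (simp add: bounded_op_diff[OF T1(1)])
    have a2: "cnorm ipW (T2 (sT L) - T2 w) \<le> M2 * cnorm ipW (w - sT L)"
      using M2(2)[of "sT L - w"] W.cnorm_commute[of "sT L" w] by (simp add: bounded_op_diff[OF T2(1)])
    have "cnorm ipW (T1 w - T2 w) \<le> (M1 + M2) * cnorm ipW (w - sT L)"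
      using tri a1 a2 unfolding eqL by (simp add: algebra_simps)
    also have "\<dots> \<le> (M1 + M2) * (e / k)"
      using mult_left_mono[OF less_imp_le[OF L], of "M1 + M2"] M1 M2 by simp
    also have "\<dots> < k * (e / k)"
    proof -
      have "M1 + M2 < k" unfolding k_def by simp
      moreover have "e / k > 0" using e k by simp
      ultimately show ?thesis by (rule mult_strict_right_mono)
    qed
    also have "\<dots> = e" using k by simp
    finally show "cnorm ipW (T1 w - T2 w) < e" .
  qed
qed

lemma tensor_op_eq: "tensor_op scW ipW tens Q R = Text"
proof -
  have "\<exists>!T. bounded_op scW ipW T \<and> (\<forall>x y. T (tens x y) = tens (Q x) (R y))"
    using Text_bounded_op Text_tens uniq by blast
  moreover have "bounded_op scW ipW Text \<and> (\<forall>x y. Text (tens x y) = tens (Q x) (R y))"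
    using Text_bounded_op Text_tens by blast
  ultimately show ?thesis unfolding tensor_op_def by (rule the1_equality[where P="\<lambda>T. bounded_op scW ipW T \<and> (\<forall>x y. T (tens x y) = tens (Q x) (R y))"])
qed

lemma tensor_op_tens: "tensor_op scW ipW tens Q R (tens x y) = tens (Q x) (R y)"
  by (simp add: tensor_op_eq Text_tens)

end


lemma hilbert_cis: "hilbert_space sc ip \<Longrightarrow> cis sc ip"
  unfolding hilbert_space_def cis_def by blast

lemma hilbert_tensor_setup:
  assumes "hilbert_tensor scF ipF scG ipG scW ipW tens"
  shows "tensor_setup scF ipF scG ipG scW ipW tens"
proof -
  have h: "hilbert_space scF ipF" "hilbert_space scG ipG" "hilbert_space scW ipW"
    and l1: "\<And>y. Vector_Spaces.linear scF scW (\<lambda>x. tens x y)"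
    and l2: "\<And>x. Vector_Spaces.linear scG scW (tens x)"
    and ip: "\<And>x y x' y'. ipW (tens x y) (tens x' y') = ipF x x' * ipG y y'"
    using assms unfolding hilbert_tensor_def by blast+
  show ?thesis
    unfolding tensor_setup_def tensor_setup_axioms_def
    using hilbert_cis[OF h(1)] hilbert_cis[OF h(2)] hilbert_cis[OF h(3)] ip
      l1[unfolded Vector_Spaces.linear_iff] l2[unfolded Vector_Spaces.linear_iff]
    by blast
qed

lemma bounded_op_props:
  assumes "bounded_op sc ip T" and C: "cis sc ip"
  shows "T (x + y) = T x + T y" "T (sc a x) = sc a (T x)"
    "\<exists>M\<ge>0. \<forall>x. cnorm ip (T x) \<le> M * cnorm ip x"
proof -
  show "T (x + y) = T x + T y" "T (sc a x) = sc a (T x)"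
    using assms unfolding bounded_op_def by (meson Vector_Spaces.linear_iff)+
  obtain M where M: "\<forall>x. cnorm ip (T x) \<le> M * cnorm ip x" using assms unfolding bounded_op_def by blast
  have "\<forall>x. cnorm ip (T x) \<le> \<bar>M\<bar> * cnorm ip x"
  proof
    fix x
    have "cnorm ip x \<ge> 0" using cis.cnorm_nonneg[OF C] .
    then show "cnorm ip (T x) \<le> \<bar>M\<bar> * cnorm ip x"
      using M by (meson abs_ge_self mult_right_mono order_trans)
  qed
  then show "\<exists>M\<ge>0. \<forall>x. cnorm ip (T x) \<le> M * cnorm ip x" by (intro exI[of _ "\<bar>M\<bar>"]) auto
qed

lemma tensor_op_tens_global:
  assumes HT: "hilbert_tensor scF ipF scG ipG scW ipW tens"
    and BQ: "bounded_op scF ipF Q" and BR: "bounded_op scG ipG R"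
  shows "tensor_op scW ipW tens Q R (tens x y) = tens (Q x) (R y)"
proof -
  interpret tensor_setup scF ipF scG ipG scW ipW tens by (rule hilbert_tensor_setup[OF HT])
  obtain MQ where MQ: "MQ \<ge> 0" "\<forall>x. cnorm ipF (Q x) \<le> MQ * cnorm ipF x"
    using bounded_op_props(3)[OF BQ F.cis_axioms] by blast
  obtain MR where MR: "MR \<ge> 0" "\<forall>x. cnorm ipG (R x) \<le> MR * cnorm ipG x"
    using bounded_op_props(3)[OF BR G.cis_axioms] by blast
  have comp: "hilbert_space scW ipW" using HT unfolding hilbert_tensor_def by blast
  have dense: "\<exists>L. cnorm ipW (w - sT L) < e" if epos: "e > 0" for w e
  proof -
    obtain p xs ys where "cnorm ipW (w - (\<Sum>k<(p::nat). tens (xs k) (ys k))) < e"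
      using HT epos unfolding hilbert_tensor_def by blast
    moreover have "(\<Sum>k<p. tens (xs k) (ys k)) = sT (map (\<lambda>k. (xs k, ys k)) [0..<p])"
      by (induction p) (simp_all add: sT_append add.commute)
    ultimately show ?thesis by auto
  qed
  interpret tensor_ops scF ipF scG ipG scW ipW tens Q R MQ MR
    by unfold_locales (use bounded_op_props(1,2)[OF BQ F.cis_axioms] bounded_op_props(1,2)[OF BR G.cis_axioms] MQ MR dense comp in auto)
  show ?thesis by (rule tensor_op_tens)
qed

lemma sums_in_map:
  fixes f :: "'a::ab_group_add \<Rightarrow> 'b::ab_group_add"
  assumes add: "\<And>x y. f (x + y) = f x + f y"
    and bd: "\<And>x. n2 (f x) \<le> M * n1 x" and nn: "\<And>x. n2 x \<ge> 0"
    and s: "sums_in n1 a s"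
  shows "sums_in n2 (\<lambda>i. f (a i)) (f s)"
proof -
  interpret additive f by standard (rule add)
  have eq: "(\<Sum>i<N. f (a i)) - f s = f ((\<Sum>i<N. a i) - s)" for N
    by (simp add: sum diff)
  have t: "(\<lambda>N. n1 ((\<Sum>i<N. a i) - s)) \<longlonglongrightarrow> 0" using s unfolding sums_in_def .
  have "(\<lambda>N. M * n1 ((\<Sum>i<N. a i) - s)) \<longlonglongrightarrow> 0"
    using tendsto_mult_right_zero[OF t] .
  then show ?thesis unfolding sums_in_def eq
    by (rule tendsto_sandwich[rotated 2, OF tendsto_const]) (auto simp: nn bd)
qed

context tensor_setup
begin

lemma sums_in_tens2:
  "sums_in (cnorm ipG) b s \<Longrightarrow> sums_in (cnorm ipW) (\<lambda>j. tens x (b j)) (tens x s)"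
  by (rule sums_in_map[where M="cnorm ipF x"]) (auto simp: tadd2 cnorm_tens W.cnorm_nonneg)

lemma sums_in_tens1:
  "sums_in (cnorm ipF) b s \<Longrightarrow> sums_in (cnorm ipW) (\<lambda>j. tens (b j) y) (tens s y)"
  by (rule sums_in_map[where M="cnorm ipG y"]) (auto simp: tadd1 cnorm_tens W.cnorm_nonneg mult.commute)

lemma frame_lemma:
  assumes TUV: "\<And>x y. TUV (tens x y) = tens (U x) (V y)"
    and TC: "\<And>x y. TC (tens x y) = tens (C1 x) (C2 y)"
    and fr1: "ctrl_frame ipF C1 phi" and fr2: "ctrl_frame ipG C2 psi"
    and U': "\<And>x y. ipF (U x) y = ipF x (U' y)" "\<And>x. U (U' x) = x"
    and V': "\<And>x y. ipG (V x) y = ipG x (V' y)" "\<And>x. V (V' x) = x"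
    and c1: "\<And>x. C1 (U x) = U (C1 x)" and c2: "\<And>y. C2 (V y) = V (C2 y)"
  shows "ctrl_frame2 ipW tens TC (\<lambda>i j. TUV (tens (phi i) (psi j)))"
proof -
  obtain A1 B1 where AB1: "0 < A1" "A1 \<le> B1" and F1: "\<And>f. \<exists>s. (\<lambda>i. ipF f (phi i) * ipF (C1 (phi i)) f) sums s \<and> Im s = 0 \<and>
              A1 * (cnorm ipF f)\<^sup>2 \<le> Re s \<and> Re s \<le> B1 * (cnorm ipF f)\<^sup>2"
    using fr1 unfolding ctrl_frame_def by blast
  obtain A2 B2 where AB2: "0 < A2" "A2 \<le> B2" and F2: "\<And>g. \<exists>s. (\<lambda>i. ipG g (psi i) * ipG (C2 (psi i)) g) sums s \<and> Im s = 0 \<and>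
              A2 * (cnorm ipG g)\<^sup>2 \<le> Re s \<and> Re s \<le> B2 * (cnorm ipG g)\<^sup>2"
    using fr2 unfolding ctrl_frame_def by blast
  have nU: "cnorm ipF (U' f) = cnorm ipF f" for f
    using U'(1)[of "U' f" f] U'(2)[of f] unfolding cnorm_def by simp
  have nV: "cnorm ipG (V' g) = cnorm ipG g" for g
    using V'(1)[of "V' g" g] V'(2)[of g] unfolding cnorm_def by simp
  show ?thesis
    unfolding ctrl_frame2_def
  proof (rule exI[of _ "A1 * A2"], rule exI[of _ "B1 * B2"], intro conjI allI)
    show "0 < A1 * A2" using AB1 AB2 by simp
    show "A1 * A2 \<le> B1 * B2" using AB1 AB2 by (simp add: mult_mono)
  next
    fix f g
    obtain s1 where s1: "(\<lambda>i. ipF (U' f) (phi i) * ipF (C1 (phi i)) (U' f)) sums s1" "Im s1 = 0"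
      "A1 * (cnorm ipF f)\<^sup>2 \<le> Re s1" "Re s1 \<le> B1 * (cnorm ipF f)\<^sup>2"
      using F1[of "U' f"] nU by auto
    obtain s2 where s2: "(\<lambda>i. ipG (V' g) (psi i) * ipG (C2 (psi i)) (V' g)) sums s2" "Im s2 = 0"
      "A2 * (cnorm ipG g)\<^sup>2 \<le> Re s2" "Re s2 \<le> B2 * (cnorm ipG g)\<^sup>2"
      using F2[of "V' g"] nV by auto
    define a where "a i = ipF (U' f) (phi i) * ipF (C1 (phi i)) (U' f)" for i
    define b where "b j = ipG (V' g) (psi j) * ipG (C2 (psi j)) (V' g)" for j
    have fU: "ipF f (U x) = ipF (U' f) x" for x
      using U'(1)[of x f] F.ip_cnj[of f "U x"] F.ip_cnj[of x "U' f"] by simp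
    have gV: "ipG g (V x) = ipG (V' g) x" for x
      using V'(1)[of x g] G.ip_cnj[of g "V x"] G.ip_cnj[of x "V' g"] by simp
    have trm: "ipW (tens f g) (TUV (tens (phi i) (psi j))) * ipW (TC (TUV (tens (phi i) (psi j)))) (tens f g)
        = a i * b j" for i j
      by (simp add: TUV TC tip c1 c2 U'(1) V'(1) fU gV a_def b_def mult_ac)
    show "\<exists>r s. (\<forall>i. (\<lambda>j. ipW (tens f g) (TUV (tens (phi i) (psi j))) *
                 ipW (TC (TUV (tens (phi i) (psi j)))) (tens f g)) sums r i) \<and>
           r sums s \<and> Im s = 0 \<and>
           A1 * A2 * (cnorm ipW (tens f g))\<^sup>2 \<le> Re s \<and> Re s \<le> B1 * B2 * (cnorm ipW (tens f g))\<^sup>2"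
    proof (intro exI[of _ "\<lambda>i. a i * s2"] exI[of _ "s1 * s2"] conjI allI)
      fix i
      show "(\<lambda>j. ipW (tens f g) (TUV (tens (phi i) (psi j))) *
                 ipW (TC (TUV (tens (phi i) (psi j)))) (tens f g)) sums (a i * s2)"
        unfolding trm using sums_mult[OF s2(1)[folded b_def]] .
    next
      show "(\<lambda>i. a i * s2) sums (s1 * s2)" using sums_mult2[OF s1(1)[folded a_def]] .
      show "Im (s1 * s2) = 0" using s1(2) s2(2) by simp
      have re: "Re (s1 * s2) = Re s1 * Re s2" using s1(2) s2(2) by simp
      have nt: "(cnorm ipW (tens f g))\<^sup>2 = (cnorm ipF f)\<^sup>2 * (cnorm ipG g)\<^sup>2"
        by (simp add: cnorm_tens power_mult_distrib)
      have p1: "0 \<le> A1 * (cnorm ipF f)\<^sup>2" using AB1 by simp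
      have p2: "0 \<le> A2 * (cnorm ipG g)\<^sup>2" using AB2 by simp
      have "(A1 * (cnorm ipF f)\<^sup>2) * (A2 * (cnorm ipG g)\<^sup>2) \<le> Re s1 * Re s2"
        using mult_mono[OF s1(3) s2(3)] p1 p2 s1(3) by linarith
      then show "A1 * A2 * (cnorm ipW (tens f g))\<^sup>2 \<le> Re (s1 * s2)"
        unfolding re nt by (simp add: mult_ac)
      have "Re s1 * Re s2 \<le> (B1 * (cnorm ipF f)\<^sup>2) * (B2 * (cnorm ipG g)\<^sup>2)"
      proof (rule mult_mono[OF s1(4) s2(4)])
        show "0 \<le> B1 * (cnorm ipF f)\<^sup>2" using AB1 by simp
        show "0 \<le> Re s2" using p2 s2(3) by linarith
      qed
      then show "Re (s1 * s2) \<le> B1 * B2 * (cnorm ipW (tens f g))\<^sup>2"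
        unfolding re nt by (simp add: mult_ac)
    qed
  qed
qed


lemma dual_lemma:
  assumes TUV: "\<And>x y. TUV (tens x y) = tens (U x) (V y)"
    and TC: "\<And>x y. TC (tens x y) = tens (C1 x) (C2 y)"
    and d1: "\<And>f. sums_in (cnorm ipF) (\<lambda>i. scF (ipF f (e i)) (C1 (phi i))) f"
    and d2: "\<And>g. sums_in (cnorm ipG) (\<lambda>j. scG (ipG g (h j)) (C2 (psi j))) g"
    and U': "\<And>x y. ipF (U x) y = ipF x (U' y)" "\<And>x. U (U' x) = x"
    and V': "\<And>x y. ipG (V x) y = ipG x (V' y)" "\<And>x. V (V' x) = x"
    and BU: "bounded_op scF ipF U" and BV: "bounded_op scG ipG V"
    and c1: "\<And>x. C1 (U x) = U (C1 x)" and c2: "\<And>y. C2 (V y) = V (C2 y)"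
  shows "\<exists>r. (\<forall>i. sums_in (cnorm ipW)
            (\<lambda>j. scW (ipW (tens f g) (TUV (tens (e i) (h j)))) (TC (TUV (tens (phi i) (psi j))))) (r i)) \<and>
          sums_in (cnorm ipW) r (tens f g)"
proof -
  define al where "al i = ipF (U' f) (e i)" for i
  define be where "be j = ipG (V' g) (h j)" for j
  define x where "x i = scF (al i) (U (C1 (phi i)))" for i
  have fU: "ipF f (U y) = ipF (U' f) y" for y
    using U'(1)[of y f] F.ip_cnj[of f "U y"] F.ip_cnj[of y "U' f"] by simp
  have gV: "ipG g (V y) = ipG (V' g) y" for y
    using V'(1)[of y g] G.ip_cnj[of g "V y"] G.ip_cnj[of y "V' g"] by simp
  obtain MU where MU: "\<forall>x. cnorm ipF (U x) \<le> MU * cnorm ipF x"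
    using bounded_op_props(3)[OF BU F.cis_axioms] by blast
  obtain MV where MV: "\<forall>x. cnorm ipG (V x) \<le> MV * cnorm ipG x"
    using bounded_op_props(3)[OF BV G.cis_axioms] by blast
  have GV: "sums_in (cnorm ipG) (\<lambda>j. V (scG (be j) (C2 (psi j)))) g"
  proof -
    have "sums_in (cnorm ipG) (\<lambda>j. V (scG (be j) (C2 (psi j)))) (V (V' g))"
      by (rule sums_in_map[where M=MV, OF bounded_op_props(1)[OF BV G.cis_axioms]])
        (use MV G.cnorm_nonneg d2[of "V' g", folded be_def] in auto)
    then show ?thesis using V'(2) by simp
  qed
  have FU: "sums_in (cnorm ipF) (\<lambda>i. U (scF (al i) (C1 (phi i)))) f"
  proof -
    have "sums_in (cnorm ipF) (\<lambda>i. U (scF (al i) (C1 (phi i)))) (U (U' f))"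
      by (rule sums_in_map[where M=MU, OF bounded_op_props(1)[OF BU F.cis_axioms]])
        (use MU F.cnorm_nonneg d1[of "U' f", folded al_def] in auto)
    then show ?thesis using U'(2) by simp
  qed
  have trm: "scW (ipW (tens f g) (TUV (tens (e i) (h j)))) (TC (TUV (tens (phi i) (psi j))))
      = tens (x i) (V (scG (be j) (C2 (psi j))))" for i j
  proof -
    have "scW (ipW (tens f g) (TUV (tens (e i) (h j)))) (TC (TUV (tens (phi i) (psi j))))
        = scW (al i * be j) (tens (U (C1 (phi i))) (V (C2 (psi j))))"
      by (simp add: TUV TC tip fU gV c1 c2 al_def be_def)
    also have "\<dots> = tens (x i) (V (scG (be j) (C2 (psi j))))"
      by (simp add: x_def bounded_op_props(2)[OF BV G.cis_axioms] tsc1 tsc2)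
    finally show ?thesis .
  qed
  show ?thesis
  proof (intro exI[of _ "\<lambda>i. tens (x i) g"] conjI allI)
    fix i
    show "sums_in (cnorm ipW)
            (\<lambda>j. scW (ipW (tens f g) (TUV (tens (e i) (h j)))) (TC (TUV (tens (phi i) (psi j))))) (tens (x i) g)"
      unfolding trm by (rule sums_in_tens2[OF GV])
  next
    have "U (scF (al i) (C1 (phi i))) = x i" for i
      by (simp add: x_def bounded_op_props(2)[OF BU F.cis_axioms])
    then show "sums_in (cnorm ipW) (\<lambda>i. tens (x i) g) (tens f g)"
      using sums_in_tens1[OF FU, of g] by simp
  qed
qed

end

theorem theorem4p12:
  fixes n :: nat
    and scH :: "complex \<Rightarrow> 'h::ab_group_add \<Rightarrow> 'h" and nipH :: "'h \<Rightarrow> 'h \<Rightarrow> 'h list \<Rightarrow> complex"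
    and scK :: "complex \<Rightarrow> 'k::ab_group_add \<Rightarrow> 'k" and nipK :: "'k \<Rightarrow> 'k \<Rightarrow> 'k list \<Rightarrow> complex"
    and as :: "'h list" and bs :: "'k list"
    and scF :: "complex \<Rightarrow> 'hf::ab_group_add \<Rightarrow> 'hf" and ipF :: "'hf \<Rightarrow> 'hf \<Rightarrow> complex"
    and qH :: "'h \<Rightarrow> 'hf"
    and scG :: "complex \<Rightarrow> 'kg::ab_group_add \<Rightarrow> 'kg" and ipG :: "'kg \<Rightarrow> 'kg \<Rightarrow> complex"
    and qK :: "'k \<Rightarrow> 'kg"
    and scW :: "complex \<Rightarrow> 'w::ab_group_add \<Rightarrow> 'w" and ipW :: "'w \<Rightarrow> 'w \<Rightarrow> complex"
    and tens :: "'hf \<Rightarrow> 'kg \<Rightarrow> 'w"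
    and C1 U :: "'hf \<Rightarrow> 'hf" and C2 V :: "'kg \<Rightarrow> 'kg"
    and fs es :: "nat \<Rightarrow> 'h" and gs hs :: "nat \<Rightarrow> 'k"
  assumes "n \<ge> 2"
    and "n_hilbert_space n scH nipH" and "n_hilbert_space n scK nipK"
    and "length as = n - 1" and "length bs = n - 1"
    and "F_completion nipH as scH scF ipF qH"
    and "F_completion nipK bs scK scG ipG qK"
    and "hilbert_tensor scF ipF scG ipG scW ipW tens"
    and "GB_op scF ipF C1" and "GB_op scG ipG C2"
    and "dual_ctrl_frames scF ipF C1 (\<lambda>i. qH (fs i)) (\<lambda>i. qH (es i))"
    and "dual_ctrl_frames scG ipG C2 (\<lambda>j. qK (gs j)) (\<lambda>j. qK (hs j))"
    and "unitary_op scF ipF U" and "unitary_op scG ipG V"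
    and "\<forall>x. C1 (U x) = U (C1 x)" and "\<forall>y. C2 (V y) = V (C2 y)"
  shows "dual_ctrl_frames2 scW ipW tens (tensor_op scW ipW tens C1 C2)
           (\<lambda>i j. tensor_op scW ipW tens U V (tens (qH (fs i)) (qK (gs j))))
           (\<lambda>i j. tensor_op scW ipW tens U V (tens (qH (es i)) (qK (hs j))))"
proof -
  note HT = assms(8)
  interpret tensor_setup scF ipF scG ipG scW ipW tens by (rule hilbert_tensor_setup[OF HT])
  have BC1: "bounded_op scF ipF C1" using assms(9) unfolding GB_op_def by blast
  have BC2: "bounded_op scG ipG C2" using assms(10) unfolding GB_op_def by blast
  have BU: "bounded_op scF ipF U" using assms(13) unfolding unitary_op_def by blast
  have BV: "bounded_op scG ipG V" using assms(14) unfolding unitary_op_def by blast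
  obtain U' where U': "\<And>x y. ipF (U x) y = ipF x (U' y)" "\<And>x. U (U' x) = x"
    using assms(13) unfolding unitary_op_def by blast
  obtain V' where V': "\<And>x y. ipG (V x) y = ipG x (V' y)" "\<And>x. V (V' x) = x"
    using assms(14) unfolding unitary_op_def by blast
  have TUV: "\<And>x y. tensor_op scW ipW tens U V (tens x y) = tens (U x) (V y)"
    by (rule tensor_op_tens_global[OF HT BU BV])
  have TC: "\<And>x y. tensor_op scW ipW tens C1 C2 (tens x y) = tens (C1 x) (C2 y)"
    by (rule tensor_op_tens_global[OF HT BC1 BC2])
  have c1: "\<And>x. C1 (U x) = U (C1 x)" using assms(15) by blast
  have c2: "\<And>y. C2 (V y) = V (C2 y)" using assms(16) by blast
  have D1: "ctrl_frame ipF C1 (\<lambda>i. qH (fs i))" "ctrl_frame ipF C1 (\<lambda>i. qH (es i))"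
    "\<And>f. sums_in (cnorm ipF) (\<lambda>i. scF (ipF f (qH (es i))) (C1 (qH (fs i)))) f"
    using assms(11) unfolding dual_ctrl_frames_def by blast+
  have D2: "ctrl_frame ipG C2 (\<lambda>j. qK (gs j))" "ctrl_frame ipG C2 (\<lambda>j. qK (hs j))"
    "\<And>g. sums_in (cnorm ipG) (\<lambda>j. scG (ipG g (qK (hs j))) (C2 (qK (gs j)))) g"
    using assms(12) unfolding dual_ctrl_frames_def by blast+
  show ?thesis
    unfolding dual_ctrl_frames2_def
  proof (intro conjI allI)
    show "ctrl_frame2 ipW tens (tensor_op scW ipW tens C1 C2)
        (\<lambda>i j. tensor_op scW ipW tens U V (tens (qH (fs i)) (qK (gs j))))"
      by (rule frame_lemma[where phi="\<lambda>i. qH (fs i)" and psi="\<lambda>j. qK (gs j)", OF TUV TC D1(1) D2(1) U' V' c1 c2])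
    show "ctrl_frame2 ipW tens (tensor_op scW ipW tens C1 C2)
        (\<lambda>i j. tensor_op scW ipW tens U V (tens (qH (es i)) (qK (hs j))))"
      by (rule frame_lemma[where phi="\<lambda>i. qH (es i)" and psi="\<lambda>j. qK (hs j)", OF TUV TC D1(2) D2(2) U' V' c1 c2])
  next
    fix f g
    show "\<exists>r. (\<forall>i. sums_in (cnorm ipW)
              (\<lambda>j. scW (ipW (tens f g) (tensor_op scW ipW tens U V (tens (qH (es i)) (qK (hs j)))))
                 (tensor_op scW ipW tens C1 C2 (tensor_op scW ipW tens U V (tens (qH (fs i)) (qK (gs j))))))
              (r i)) \<and>
          sums_in (cnorm ipW) r (tens f g)"
      by (rule dual_lemma[where e="\<lambda>i. qH (es i)" and phi="\<lambda>i. qH (fs i)"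
            and h="\<lambda>j. qK (hs j)" and psi="\<lambda>j. qK (gs j)", OF TUV TC D1(3) D2(3) U' V' BU BV c1 c2])
  qed
qed

end
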